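(* Consider $\dot x=f(x,u)$ with $x\in\mathbb{R}^n$, $f:\mathbb{R}^n\times\mathbb{R}^m\to\mathbb{R}^n$ continuous, $f(0,0)=0$, and suppose $V:\mathbb{R}^n\to\mathbb{R}_{\ge0}$ is a FxT-ISS Lyapunov function for this system. Let $\gamma\in\mathcal{K}^{\mathcal{P}^{-1}}$. Then there exists $\lambda\ge1$ such that $\tilde V(x)=\gamma^\lambda(V(x))=(\gamma(V(x)))^\lambda$ is a FxT-ISS Lyapunov function for the system.
   Context: $\mathcal{K}_\infty$: continuous strictly increasing unbounded $\alpha:\mathbb{R}_{\ge0}\to\mathbb{R}_{\ge0}$ with $\alpha(0)=0$. $\mathcal{K}^{\mathcal{P}}$: the $\alpha\in\mathcal{K}_\infty$ of the form $\sum_{i=1}^nc_is^{p_i}$ with real $c_i\ne0$, $p_i>0$, and $\alpha'(s)>0$ for $s>0$. $\mathcal{K}^{\mathcal{P}^{-1}}$: the $\alpha\in\mathcal{K}_\infty$ with $\alpha^{-1}\in\mathcal{K}^{\mathcal{P}}$. $\mathcal{K}_{\mathrm{FxT}}$: functions $c_1s^{p_1}+c_2s^{p_2}$ with $c_1,c_2>0$, $p_1\in(0,1)$, $p_2>1$. A locally Lipschitz $V:\mathbb{R}^n\to\mathbb{R}_{\ge0}$ is a FxT-ISS Lyapunov function for $\dot x=f(x,u)$ if there exist $\underline\alpha,\overline\alpha,\chi\in\mathcal{K}_\infty$ and $\Psi\in\mathcal{K}_{\mathrm{FxT}}$ with $\underline\alpha(|x|)\le V(x)\le\overline\alpha(|x|)$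 for all $x$ and, for all $x,u$, $V(x)\ge\chi(|u|)\implies DV(x;f(x,u))\le-\Psi(V(x))$, where $DV(x;v)=\limsup_{h\to0^+}\frac{V(x+hv)-V(x)}{h}$. *)

theory Defs
  imports "HOL-Analysis.Analysis"
begin

definition Kinf :: "(real \<Rightarrow> real) set" where
  "Kinf = {\<alpha>. continuous_on {0..} \<alpha> \<and> strict_mono_on {0..} \<alpha> \<and> \<alpha> 0 = 0
              \<and> filterlim \<alpha> at_top at_top}"

definition KP :: "(real \<Rightarrow> real) set" where
  "KP = {\<alpha>. \<alpha> \<in> Kinf \<and>
     (\<exists>(N::nat) (c::nat \<Rightarrow> real) (p::nat \<Rightarrow> real).
        (\<forall>i<N. c i \<noteq> 0 \<and> p i > 0) \<and>
        (\<forall>s\<ge>0. \<alpha> s = (\<Sum>i<N. c i * s powr p i))) \<and>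
     (\<forall>s>0. \<exists>d>0. (\<alpha> has_real_derivative d) (at s))}"

definition KPinv :: "(real \<Rightarrow> real) set" where
  "KPinv = {\<alpha>. \<alpha> \<in> Kinf \<and>
     (\<exists>\<beta>\<in>KP. \<forall>s\<ge>0. \<beta> (\<alpha> s) = s \<and> \<alpha> (\<beta> s) = s)}"

definition KFxT :: "(real \<Rightarrow> real) set" where
  "KFxT = {\<Psi>. \<exists>c1 c2 p1 p2. c1 > 0 \<and> c2 > 0 \<and> 0 < p1 \<and> p1 < 1 \<and> p2 > 1 \<and>
              (\<forall>s\<ge>0. \<Psi> s = c1 * s powr p1 + c2 * s powr p2)}"

definition dini :: "('a::real_normed_vector \<Rightarrow> real) \<Rightarrow> 'a \<Rightarrow> 'a \<Rightarrow> ereal" where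
  "dini V x v = Limsup (at_right 0) (\<lambda>h. ereal ((V (x + h *\<^sub>R v) - V x) / h))"

definition loc_lipschitz :: "('a::metric_space \<Rightarrow> real) \<Rightarrow> bool" where
  "loc_lipschitz V \<longleftrightarrow> (\<forall>x. \<exists>e>0. \<exists>L. L-lipschitz_on (ball x e) V)"

definition FxT_ISS_Lyap ::
  "('a::real_normed_vector \<Rightarrow> 'b::real_normed_vector \<Rightarrow> 'a) \<Rightarrow> ('a \<Rightarrow> real) \<Rightarrow> bool" where
  "FxT_ISS_Lyap f V \<longleftrightarrow> loc_lipschitz V \<and> (\<forall>x. V x \<ge> 0) \<and>
     (\<exists>\<alpha>l \<alpha>u chi \<Psi>. \<alpha>l \<in> Kinf \<and> \<alpha>u \<in> Kinf \<and> chi \<in> Kinf \<and> \<Psi> \<in> KFxT \<and>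
        (\<forall>x. \<alpha>l (norm x) \<le> V x \<and> V x \<le> \<alpha>u (norm x)) \<and>
        (\<forall>x u. V x \<ge> chi (norm u) \<longrightarrow> dini V x (f x u) \<le> ereal (- \<Psi> (V x))))"

end

theory Submission
  imports Defs
begin


lemma psum_at0:
  fixes E :: "real set" and D h :: "real \<Rightarrow> real"
  assumes fin: "finite E" and aE: "a \<in> E" and gt: "\<And>e. e \<in> E \<Longrightarrow> e \<noteq> a \<Longrightarrow> h e > h a"
    and eps: "\<epsilon> > 0"
  shows "eventually (\<lambda>s. \<bar>(\<Sum>e\<in>E. D e * s powr h e) - D a * s powr h a\<bar> \<le> \<epsilon> * s powr h a) (at_right 0)"
proof -
  let ?T = "\<lambda>s. \<Sum>e\<in>E-{a}. \<bar>D e\<bar> * s powr (h e - h a)"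
  have "(?T \<longlongrightarrow> (\<Sum>e\<in>E-{a}. \<bar>D e\<bar> * 0)) (at_right 0)"
  proof (rule tendsto_sum)
    fix e assume e: "e \<in> E - {a}"
    have "((\<lambda>s::real. s powr (h e - h a)) \<longlongrightarrow> 0) (at_right 0)"
      by (rule tendsto_zero_powrI) (use gt e in \<open>auto intro!: tendsto_ident_at eventually_at_rightI[of 0 1]\<close>)
    then show "((\<lambda>s. \<bar>D e\<bar> * s powr (h e - h a)) \<longlongrightarrow> \<bar>D e\<bar> * 0) (at_right 0)"
      by (intro tendsto_mult tendsto_const)
  qed
  then have "(?T \<longlongrightarrow> 0) (at_right 0)" by simp
  then have ev: "eventually (\<lambda>s. ?T s < \<epsilon>) (at_right 0)"
    using eps by (rule order_tendstoD)
  have pos: "eventually (\<lambda>s::real. s > 0) (at_right 0)"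
    by (simp add: eventually_at_right_less)
  show ?thesis using ev pos
  proof eventually_elim
    case (elim s)
    have "(\<Sum>e\<in>E. D e * s powr h e) - D a * s powr h a = (\<Sum>e\<in>E-{a}. D e * s powr h e)"
      using fin aE by (simp add: sum.remove)
    also have "\<bar>\<dots>\<bar> \<le> (\<Sum>e\<in>E-{a}. \<bar>D e * s powr h e\<bar>)" by (rule sum_abs)
    also have "\<dots> = (\<Sum>e\<in>E-{a}. s powr h a * (\<bar>D e\<bar> * s powr (h e - h a)))"
      using elim by (intro sum.cong refl) (simp add: abs_mult powr_diff)
    also have "\<dots> = s powr h a * ?T s" by (simp add: sum_distrib_left)
    also have "\<dots> \<le> s powr h a * \<epsilon>" using elim by (intro mult_left_mono) auto
    finally show ?case by (simp add: mult.commute)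
  qed
qed

lemma psum_attop:
  fixes E :: "real set" and D h :: "real \<Rightarrow> real"
  assumes fin: "finite E" and aE: "a \<in> E" and gt: "\<And>e. e \<in> E \<Longrightarrow> e \<noteq> a \<Longrightarrow> h e < h a"
    and eps: "\<epsilon> > 0"
  shows "eventually (\<lambda>s. \<bar>(\<Sum>e\<in>E. D e * s powr h e) - D a * s powr h a\<bar> \<le> \<epsilon> * s powr h a) at_top"
proof -
  let ?T = "\<lambda>s. \<Sum>e\<in>E-{a}. \<bar>D e\<bar> * s powr (h e - h a)"
  have "(?T \<longlongrightarrow> (\<Sum>e\<in>E-{a}. \<bar>D e\<bar> * 0)) at_top"
  proof (rule tendsto_sum)
    fix e assume e: "e \<in> E - {a}"
    have "((\<lambda>s::real. s powr (h e - h a)) \<longlongrightarrow> 0) at_top"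
      by (rule tendsto_neg_powr) (use gt e in \<open>auto intro!: filterlim_ident\<close>)
    then show "((\<lambda>s. \<bar>D e\<bar> * s powr (h e - h a)) \<longlongrightarrow> \<bar>D e\<bar> * 0) at_top"
      by (intro tendsto_mult tendsto_const)
  qed
  then have "(?T \<longlongrightarrow> 0) at_top" by simp
  then have ev: "eventually (\<lambda>s. ?T s < \<epsilon>) at_top"
    using eps by (rule order_tendstoD)
  have pos: "eventually (\<lambda>s::real. s > 0) at_top"
    by (rule eventually_gt_at_top)
  show ?thesis using ev pos
  proof eventually_elim
    case (elim s)
    have "(\<Sum>e\<in>E. D e * s powr h e) - D a * s powr h a = (\<Sum>e\<in>E-{a}. D e * s powr h e)"
      using fin aE by (simp add: sum.remove)
    also have "\<bar>\<dots>\<bar> \<le> (\<Sum>e\<in>E-{a}. \<bar>D e * s powr h e\<bar>)" by (rule sum_abs)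
    also have "\<dots> = (\<Sum>e\<in>E-{a}. s powr h a * (\<bar>D e\<bar> * s powr (h e - h a)))"
      using elim by (intro sum.cong refl) (simp add: abs_mult powr_diff)
    also have "\<dots> = s powr h a * ?T s" by (simp add: sum_distrib_left)
    also have "\<dots> \<le> s powr h a * \<epsilon>" using elim by (intro mult_left_mono) auto
    finally show ?case by (simp add: mult.commute)
  qed
qed
lemma Kinf_less: "\<alpha> \<in> Kinf \<Longrightarrow> 0 \<le> s \<Longrightarrow> s < t \<Longrightarrow> \<alpha> s < \<alpha> t"
proof -
  assume "\<alpha> \<in> Kinf" "0 \<le> s" "s < t"
  then have "strict_mono_on {0..} \<alpha>" "s \<in> {0..}" "t \<in> {0..}" unfolding Kinf_def by auto
  then show ?thesis using \<open>s < t\<close> by (rule strict_mono_onD)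
qed
lemma Kinf_mono: "\<alpha> \<in> Kinf \<Longrightarrow> 0 \<le> s \<Longrightarrow> s \<le> t \<Longrightarrow> \<alpha> s \<le> \<alpha> t"
  using Kinf_less[of \<alpha> s t] by (cases "s = t") auto
lemma Kinf_0: "\<alpha> \<in> Kinf \<Longrightarrow> \<alpha> 0 = 0"
  unfolding Kinf_def by auto
lemma Kinf_pos: "\<alpha> \<in> Kinf \<Longrightarrow> 0 < s \<Longrightarrow> 0 < \<alpha> s"
  using Kinf_less[of \<alpha> 0 s] Kinf_0[of \<alpha>] by auto
lemma Kinf_nonneg: "\<alpha> \<in> Kinf \<Longrightarrow> 0 \<le> s \<Longrightarrow> 0 \<le> \<alpha> s"
  using Kinf_mono[of \<alpha> 0 s] Kinf_0[of \<alpha>] by auto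
lemma Kinf_comp: "\<alpha> \<in> Kinf \<Longrightarrow> g \<in> Kinf \<Longrightarrow> (\<lambda>s. g (\<alpha> s)) \<in> Kinf"
proof -
  assume a: "\<alpha> \<in> Kinf" and g: "g \<in> Kinf"
  have sub: "\<alpha> ` {0..} \<subseteq> {0..}" using Kinf_nonneg[OF a] by auto
  have ca: "continuous_on {0..} \<alpha>" and cg: "continuous_on {0..} g"
    using a g unfolding Kinf_def by auto
  have "continuous_on {0..} (g \<circ> \<alpha>)"
    by (rule continuous_on_compose[OF ca continuous_on_subset[OF cg sub]])
  moreover have "strict_mono_on {0..} (\<lambda>s. g (\<alpha> s))"
  proof (rule strict_mono_onI)
    fix r s :: real assume "r \<in> {0..}" "s \<in> {0..}" "r < s"
    then show "g (\<alpha> r) < g (\<alpha> s)"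
      using Kinf_less[OF g, OF Kinf_nonneg[OF a], OF _ Kinf_less[OF a]] by simp
  qed
  moreover have "filterlim (\<lambda>s. g (\<alpha> s)) at_top at_top"
    using a g unfolding Kinf_def by (auto intro: filterlim_compose)
  moreover have "g (\<alpha> 0) = 0" using Kinf_0[OF a] Kinf_0[OF g] by simp
  ultimately show ?thesis unfolding Kinf_def by (simp add: o_def)
qed

lemma abs_half: fixes y c x :: real shows "\<bar>y - c*x\<bar> \<le> (c/2)*x \<Longrightarrow> (c/2)*x \<le> y"
proof -
  assume "\<bar>y - c*x\<bar> \<le> (c/2)*x"
  then have "-(y - c*x) \<le> (c/2)*x" by (rule abs_le_D2)
  then show ?thesis by (simp add: field_simps)
qed



lemma KP_props:
  assumes "\<beta> \<in> KP"
  obtains a b A k \<delta> d\<beta> where "0<a" "a\<le>b" "0<A" "0<k" "0<\<delta>" "\<delta> \<le> 1"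
     "\<forall>s>0. (\<beta> has_real_derivative d\<beta> s) (at s) \<and> d\<beta> s > 0" "continuous_on {0<..} d\<beta>"
     "\<forall>s>0. d\<beta> s \<le> A*(s powr (a-1) + s powr (b-1))"
     "\<forall>s. 0<s \<and> s\<le>1 \<longrightarrow> k * s powr a \<le> \<beta> s" "\<forall>s\<ge>1. k * s powr b \<le> \<beta> s"
     "\<forall>s. 0<s \<and> s\<le>\<delta> \<longrightarrow> k * s powr (a-1) \<le> d\<beta> s"
proof -
  from assms obtain N :: nat and c p :: "nat \<Rightarrow> real" where bK: "\<beta> \<in> Kinf" and cp: "\<forall>i<N. c i \<noteq> 0 \<and> p i > 0"
    and rep: "\<forall>s\<ge>0. \<beta> s = (\<Sum>i<N. c i * s powr p i)"
    and der: "\<forall>s>0. \<exists>d>0. (\<beta> has_real_derivative d) (at s)"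
    unfolding KP_def mem_Collect_eq by blast
  define E0 where "E0 = p ` {..<N}"
  define C where "C e = (\<Sum>i\<in>{i\<in>{..<N}. p i = e}. c i)" for e
  define E where "E = {e\<in>E0. C e \<noteq> 0}"
  have finE0: "finite E0" unfolding E0_def by simp
  have finE: "finite E" unfolding E_def using finE0 by simp
  have Epos: "e > 0" if "e \<in> E" for e using that cp unfolding E_def E0_def by auto
  have CE: "C e \<noteq> 0" if "e \<in> E" for e using that unfolding E_def by auto
  have sumeq: "(\<Sum>i<N. c i * s powr p i) = (\<Sum>e\<in>E. C e * s powr e)" for s
  proof -
    have "(\<Sum>i<N. c i * s powr p i) = (\<Sum>e\<in>E0. \<Sum>i\<in>{i\<in>{..<N}. p i = e}. c i * s powr p i)"
      unfolding E0_def by (rule sum.image_gen) simp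
    also have "\<dots> = (\<Sum>e\<in>E0. C e * s powr e)"
      unfolding C_def by (intro sum.cong refl) (simp add: sum_distrib_right)
    also have "\<dots> = (\<Sum>e\<in>E. C e * s powr e)"
      by (rule sum.mono_neutral_right) (auto simp: finE0 E_def)
    finally show ?thesis .
  qed
  have brep: "\<beta> s = (\<Sum>e\<in>E. C e * s powr e)" if "s \<ge> 0" for s
    using rep that sumeq by simp
  define d\<beta> where "d\<beta> s = (\<Sum>e\<in>E. (C e * e) * s powr (e - 1))" for s
  have dder: "(\<beta> has_real_derivative d\<beta> s) (at s)" if s: "s > 0" for s
  proof -
    have "((\<lambda>s. \<Sum>e\<in>E. C e * s powr e) has_real_derivative d\<beta> s) (at s)"
      unfolding d\<beta>_def
    proof (rule DERIV_sum)
      fix e assume "e \<in> E"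
      show "((\<lambda>s. C e * s powr e) has_real_derivative C e * e * s powr (e - 1)) (at s)"
        using DERIV_cmult[OF has_real_derivative_powr[OF s, of e], of "C e"] by (simp add: mult.assoc)
    qed
    then show ?thesis
      by (rule has_field_derivative_transform_within_open[where S="{0<..}"]) (use s brep in auto)
  qed
  have dpos: "d\<beta> s > 0" if "s > 0" for s
    using der that dder DERIV_unique by blast
  have dcont: "continuous_on {0<..} d\<beta>"
    unfolding d\<beta>_def by (intro continuous_intros) auto
  have Ene: "E \<noteq> {}"
  proof
    assume "E = {}"
    then have "\<beta> 1 = \<beta> 0" using brep by simp
    moreover have "\<beta> 0 < \<beta> 1" using Kinf_less[OF bK, of 0 1] by simp
    ultimately show False by simp
  qed
  define a where "a = Min E"
  define b where "b = Max E"
  have aE: "a \<in> E" and bE: "b \<in> E" unfolding a_def b_def using finE Ene by auto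
  have amin: "a \<le> e" and bmax: "e \<le> b" if "e \<in> E" for e
    unfolding a_def b_def using finE that by auto
  have gtA: "a < e" if "e \<in> E" "e \<noteq> a" for e using amin[OF that(1)] that(2) by simp
  have gtA1: "a - 1 < e - 1" if "e \<in> E" "e \<noteq> a" for e using gtA[OF that] by simp
  have ltB: "e < b" if "e \<in> E" "e \<noteq> b" for e using bmax[OF that(1)] that(2) by simp
  have a0: "a > 0" using Epos aE by simp
  have ab: "a \<le> b" using amin bE by simp
  define A where "A = (\<Sum>e\<in>E. \<bar>C e\<bar> * e)"
  have A0: "A > 0" unfolding A_def
    using finE Ene by (intro sum_pos) (auto intro!: mult_pos_pos simp: CE Epos)
  have upper: "d\<beta> s \<le> A*(s powr (a-1) + s powr (b-1))" if s: "s > 0" for s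
  proof -
    have "d\<beta> s \<le> (\<Sum>e\<in>E. \<bar>C e\<bar> * e * (s powr (a-1) + s powr (b-1)))"
      unfolding d\<beta>_def
    proof (rule sum_mono)
      fix e assume e: "e \<in> E"
      have "s powr (e-1) \<le> s powr (a-1) + s powr (b-1)"
      proof (cases "s \<le> 1")
        case True
        then have "s powr (e-1) \<le> s powr (a-1)" using s amin[OF e] by (intro powr_mono') auto
        then show ?thesis by (simp add: add_increasing2)
      next
        case False
        then have "s powr (e-1) \<le> s powr (b-1)" using s bmax[OF e] by (intro powr_mono) auto
        then show ?thesis by (simp add: add_increasing)
      qed
      then have "\<bar>C e\<bar> * e * s powr (e-1) \<le> \<bar>C e\<bar> * e * (s powr (a-1) + s powr (b-1))"
        using Epos[OF e] by (intro mult_left_mono) auto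
      moreover have "C e * e * s powr (e-1) \<le> \<bar>C e\<bar> * e * s powr (e-1)"
        using Epos[OF e] by (intro mult_right_mono) auto
      ultimately show "C e * e * s powr (e - 1) \<le> \<bar>C e\<bar> * e * (s powr (a - 1) + s powr (b - 1))"
        by linarith
    qed
    also have "\<dots> = A*(s powr (a-1) + s powr (b-1))"
      unfolding A_def by (simp add: sum_distrib_right)
    finally show ?thesis .
  qed
  have Ca: "C a > 0"
  proof (rule ccontr)
    assume "\<not> C a > 0"
    then have neg: "C a < 0" using CE[OF aE] by simp
    have "eventually (\<lambda>s. \<bar>(\<Sum>e\<in>E. C e * s powr e) - C a * s powr a\<bar> \<le> (\<bar>C a\<bar>/2) * s powr a) (at_right 0)"
      using psum_at0[OF finE aE, where h="\<lambda>e. e", OF gtA, of "\<bar>C a\<bar>/2" C] neg by simp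
    then obtain t where t: "t > 0" "\<And>y. y > 0 \<Longrightarrow> y < t \<Longrightarrow>
        \<bar>(\<Sum>e\<in>E. C e * y powr e) - C a * y powr a\<bar> \<le> (\<bar>C a\<bar>/2) * y powr a"
      unfolding eventually_at_right_field by auto
    have "\<bar>\<beta> (t/2) - C a * (t/2) powr a\<bar> \<le> (\<bar>C a\<bar>/2) * (t/2) powr a"
      using t brep[of "t/2"] by simp
    moreover have "\<beta> (t/2) > 0" using Kinf_pos[OF bK] t by simp
    moreover have "(t/2) powr a > 0" using t by simp
    ultimately show False using neg
    proof -
      assume h: "\<bar>\<beta> (t/2) - C a * ((t/2) powr a)\<bar> \<le> (\<bar>C a\<bar>/2) * ((t/2) powr a)" "\<beta> (t/2) > 0" "((t/2) powr a) > 0" "C a < 0"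
      have "\<beta> (t/2) \<le> C a * ((t/2) powr a) + (\<bar>C a\<bar>/2) * ((t/2) powr a)" using abs_le_D1[OF h(1)] by linarith
      also have "\<dots> = (C a / 2) * ((t/2) powr a)" using h(4) by (simp add: algebra_simps)
      also have "\<dots> < 0" using h(3,4) by (simp add: mult_neg_pos)
      finally show False using h(2) by simp
    qed
  qed
  have "eventually (\<lambda>s. \<bar>(\<Sum>e\<in>E. C e * s powr e) - C a * s powr a\<bar> \<le> (C a/2) * s powr a) (at_right 0)"
    using psum_at0[OF finE aE, where h="\<lambda>e. e", OF gtA, of "C a/2" C] Ca by simp
  then obtain t1 where t1: "t1 > 0" "\<And>y. y > 0 \<Longrightarrow> y < t1 \<Longrightarrow>
        \<bar>(\<Sum>e\<in>E. C e * y powr e) - C a * y powr a\<bar> \<le> (C a/2) * y powr a"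
    unfolding eventually_at_right_field by auto
  have "eventually (\<lambda>s. \<bar>(\<Sum>e\<in>E. (C e * e) * s powr (e-1)) - (C a * a) * s powr (a-1)\<bar> \<le> (C a * a/2) * s powr (a-1)) (at_right 0)"
    using psum_at0[OF finE aE, where h="\<lambda>e. e - 1", OF gtA1, of "C a * a/2" "\<lambda>e. C e * e"] Ca a0 by simp
  then obtain t2 where t2: "t2 > 0" "\<And>y. y > 0 \<Longrightarrow> y < t2 \<Longrightarrow>
        \<bar>d\<beta> y - (C a * a) * y powr (a-1)\<bar> \<le> (C a * a/2) * y powr (a-1)"
    unfolding eventually_at_right_field d\<beta>_def by auto
  have Cb: "C b > 0"
  proof (rule ccontr)
    assume "\<not> C b > 0"
    then have neg: "C b < 0" using CE[OF bE] by simp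
    have "eventually (\<lambda>s. \<bar>(\<Sum>e\<in>E. C e * s powr e) - C b * s powr b\<bar> \<le> (\<bar>C b\<bar>/2) * s powr b) at_top"
      using psum_attop[OF finE bE, where h="\<lambda>e. e", OF ltB, of "\<bar>C b\<bar>/2" C] neg by simp
    then obtain R where R: "\<And>y. y \<ge> R \<Longrightarrow>
        \<bar>(\<Sum>e\<in>E. C e * y powr e) - C b * y powr b\<bar> \<le> (\<bar>C b\<bar>/2) * y powr b"
      unfolding eventually_at_top_linorder by auto
    define y where "y = max R 1"
    have "\<bar>\<beta> y - C b * y powr b\<bar> \<le> (\<bar>C b\<bar>/2) * y powr b"
      using R[of y] brep[of y] by (simp add: y_def)
    moreover have "\<beta> y > 0" using Kinf_pos[OF bK] by (simp add: y_def)
    moreover have "y powr b > 0" by (simp add: y_def)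
    ultimately show False using neg
    proof -
      assume h: "\<bar>\<beta> (y) - C b * (y powr b)\<bar> \<le> (\<bar>C b\<bar>/2) * (y powr b)" "\<beta> (y) > 0" "(y powr b) > 0" "C b < 0"
      have "\<beta> (y) \<le> C b * (y powr b) + (\<bar>C b\<bar>/2) * (y powr b)" using abs_le_D1[OF h(1)] by linarith
      also have "\<dots> = (C b / 2) * (y powr b)" using h(4) by (simp add: algebra_simps)
      also have "\<dots> < 0" using h(3,4) by (simp add: mult_neg_pos)
      finally show False using h(2) by simp
    qed
  qed
  have "eventually (\<lambda>s. \<bar>(\<Sum>e\<in>E. C e * s powr e) - C b * s powr b\<bar> \<le> (C b/2) * s powr b) at_top"
    using psum_attop[OF finE bE, where h="\<lambda>e. e", OF ltB, of "C b/2" C] Cb by simp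
  then obtain R0 where R0: "\<And>y. y \<ge> R0 \<Longrightarrow>
        \<bar>(\<Sum>e\<in>E. C e * y powr e) - C b * y powr b\<bar> \<le> (C b/2) * y powr b"
    unfolding eventually_at_top_linorder by auto
  define R where "R = max R0 1"
  have R1: "R \<ge> 1" unfolding R_def by simp
  define \<delta>1 where "\<delta>1 = min (t1/2) 1"
  have d1: "0 < \<delta>1" "\<delta>1 < t1" "\<delta>1 \<le> 1" unfolding \<delta>1_def using t1 by auto
  define \<delta> where "\<delta> = min (t2/2) 1"
  have d2: "0 < \<delta>" "\<delta> < t2" "\<delta> \<le> 1" unfolding \<delta>_def using t2 by auto
  define k where "k = Min {C a/2, \<beta> \<delta>1, C b/2, \<beta> 1 / R powr b, C a * a/2}"
  have k0: "k > 0" unfolding k_def using Ca Cb a0 Kinf_pos[OF bK, of \<delta>1] Kinf_pos[OF bK, of 1] d1 R1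
    by simp
  have kle: "k \<le> C a/2" "k \<le> \<beta> \<delta>1" "k \<le> C b/2" "k \<le> \<beta> 1 / R powr b" "k \<le> C a * a/2"
    unfolding k_def by (intro Min_le; simp)+
  have low0: "k * s powr a \<le> \<beta> s" if s: "0 < s" "s \<le> 1" for s
  proof (cases "s < \<delta>1")
    case True
    have "\<bar>\<beta> s - C a * s powr a\<bar> \<le> (C a/2) * s powr a"
      using t1(2)[of s] True d1 s brep[of s] by simp
    then have "(C a/2) * s powr a \<le> \<beta> s" by (rule abs_half)
    moreover have "k * s powr a \<le> (C a/2) * s powr a" using kle by (intro mult_right_mono) auto
    ultimately show ?thesis by linarith
  next
    case False
    have "\<beta> \<delta>1 \<le> \<beta> s" using False d1 by (intro Kinf_mono[OF bK]) auto
    moreover have "s powr a \<le> 1" using powr_mono2[of a s 1] s a0 by simp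
    then have "k * s powr a \<le> k" using k0 by (simp add: mult_left_le)
    ultimately show ?thesis using kle by linarith
  qed
  have low1: "k * s powr b \<le> \<beta> s" if s: "1 \<le> s" for s
  proof (cases "s \<ge> R")
    case True
    have "\<bar>\<beta> s - C b * s powr b\<bar> \<le> (C b/2) * s powr b"
      using R0[of s] True s brep[of s] by (simp add: R_def)
    then have "(C b/2) * s powr b \<le> \<beta> s" by (rule abs_half)
    moreover have "k * s powr b \<le> (C b/2) * s powr b" using kle by (intro mult_right_mono) auto
    ultimately show ?thesis by linarith
  next
    case False
    have "\<beta> 1 \<le> \<beta> s" using s by (intro Kinf_mono[OF bK]) auto
    moreover have "s powr b \<le> R powr b" using False s ab a0 by (intro powr_mono2) auto
    then have "k * s powr b \<le> (\<beta> 1 / R powr b) * R powr b"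
      using kle k0 by (intro mult_mono) auto
    then have "k * s powr b \<le> \<beta> 1" using R1 by simp
    ultimately show ?thesis by linarith
  qed
  have lowd: "k * s powr (a-1) \<le> d\<beta> s" if s: "0 < s" "s \<le> \<delta>" for s
  proof -
    have "\<bar>d\<beta> s - (C a * a) * s powr (a-1)\<bar> \<le> (C a * a/2) * s powr (a-1)"
      using t2(2)[of s] d2 s by simp
    then have "(C a * a/2) * s powr (a-1) \<le> d\<beta> s" by (rule abs_half)
    moreover have "k * s powr (a-1) \<le> (C a * a/2) * s powr (a-1)" using kle by (intro mult_right_mono) auto
    ultimately show ?thesis by linarith
  qed
  show ?thesis
    by (rule that[of a b A k \<delta> d\<beta>]) (use a0 ab A0 k0 d2 dcont dder dpos upper low0 low1 lowd in auto)
qed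


lemma dini_chain:
  fixes V :: "'a::real_normed_vector \<Rightarrow> real"
  assumes cont: "isCont V x" and der: "(g has_real_derivative d) (at (V x))" and d: "d > 0"
    and L: "L < 0" and DV: "dini V x v \<le> ereal L"
  shows "dini (\<lambda>y. g (V y)) x v \<le> ereal (d * L)"
proof -
  have key: "dini (\<lambda>y. g (V y)) x v \<le> ereal ((d - \<eta>) * M)"
    if LM: "L < M" "M < 0" and eta: "0 < \<eta>" "\<eta> < d" for M \<eta>
  proof -
    have "Limsup (at_right 0) (\<lambda>h. ereal ((V (x + h *\<^sub>R v) - V x) / h)) < ereal M"
    proof -
      have "ereal L < ereal M" using LM by simp
      then show ?thesis using DV unfolding dini_def by (rule le_less_trans[rotated])
    qed
    then have ev1: "eventually (\<lambda>h. ereal ((V (x + h *\<^sub>R v) - V x) / h) < ereal M) (at_right 0)"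
      by (rule Limsup_lessD)
    have "((\<lambda>y. (g y - g (V x)) / (y - V x)) \<longlongrightarrow> d) (at (V x))"
      using der by (simp add: has_field_derivative_iff)
    from LIM_D[OF this eta(1)] obtain \<delta> where \<delta>: "\<delta> > 0"
      "\<And>y. y \<noteq> V x \<and> norm (y - V x) < \<delta> \<Longrightarrow> norm ((g y - g (V x)) / (y - V x) - d) < \<eta>"
      by blast
    have "((\<lambda>h. x + h *\<^sub>R v) \<longlongrightarrow> x + 0 *\<^sub>R v) (at_right (0::real))"
      by (intro tendsto_intros tendsto_ident_at)
    then have "((\<lambda>h. x + h *\<^sub>R v) \<longlongrightarrow> x) (at_right (0::real))" by simp
    then have "((\<lambda>h. V (x + h *\<^sub>R v)) \<longlongrightarrow> V x) (at_right (0::real))"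
      by (rule isCont_tendsto_compose[OF cont])
    then have ev2: "eventually (\<lambda>h. dist (V (x + h *\<^sub>R v)) (V x) < \<delta>) (at_right 0)"
      using \<delta>(1) by (rule tendstoD)
    have ev3: "eventually (\<lambda>h::real. h > 0) (at_right 0)"
      by (simp add: eventually_at_right_less)
    have "eventually (\<lambda>h. ereal ((g (V (x + h *\<^sub>R v)) - g (V x)) / h) \<le> ereal ((d - \<eta>) * M)) (at_right 0)"
      using ev1 ev2 ev3
    proof eventually_elim
      case (elim h)
      define y where "y = V (x + h *\<^sub>R v)"
      have q: "(y - V x) / h < M" using elim(1) by (simp add: y_def)
      then have "y - V x < 0" using elim(3) LM(2)
        by (smt (verit, best) divide_nonneg_pos)
      then have yne: "y \<noteq> V x" by simp
      have "norm ((g y - g (V x)) / (y - V x) - d) < \<eta>"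
        using \<delta>(2)[of y] yne elim(2) by (simp add: y_def dist_norm)
      then have phi: "(g y - g (V x)) / (y - V x) > d - \<eta>" by simp
      have eq: "(g y - g (V x)) / h = ((g y - g (V x)) / (y - V x)) * ((y - V x) / h)"
        using yne by simp
      have "((g y - g (V x)) / (y - V x)) * ((y - V x) / h) \<le> ((g y - g (V x)) / (y - V x)) * M"
        using q phi eta by (intro mult_left_mono) auto
      also have "\<dots> \<le> (d - \<eta>) * M"
        using phi LM(2) by (intro mult_right_mono_neg) auto
      finally have "(g y - g (V x)) / h \<le> (d - \<eta>) * M" by (simp only: eq)
      then show ?case by (simp add: y_def)
    qed
    then show ?thesis unfolding dini_def by (rule Limsup_bounded)
  qed
  show ?thesis
  proof (rule ereal_le_epsilon2)
    fix e :: real assume e: "e > 0"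
    define t where "t = min (e/(2*d)) (-L/2)"
    define \<eta> where "\<eta> = min (d/2) (e/(2*(-L)))"
    have t: "t > 0" "t \<le> e/(2*d)" "t < -L" unfolding t_def using e d L by auto
    have et: "\<eta> > 0" "\<eta> < d" "\<eta> \<le> e/(2*(-L))" unfolding \<eta>_def using e d L by (auto simp: divide_pos_neg)
    have "dini (\<lambda>y. g (V y)) x v \<le> ereal ((d - \<eta>) * (L + t))"
      using t et by (intro key) auto
    also have "(d - \<eta>) * (L + t) \<le> d * L + e"
    proof -
      have 1: "d * t \<le> e/2" using t(2) d by (simp add: field_simps)
      have 2: "\<eta> * (-L) \<le> e/2" using et(3) L by (simp add: field_simps)
      have 3: "\<eta> * t \<ge> 0" using et t by simp
      have "(d - \<eta>) * (L + t) = d * L + d * t + \<eta> * (-L) - \<eta> * t" by (simp add: algebra_simps)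
      then show ?thesis using 1 2 3 by linarith
    qed
    then have "ereal ((d - \<eta>) * (L + t)) \<le> ereal (d * L) + ereal e" by simp
    finally show "dini (\<lambda>y. g (V y)) x v \<le> ereal (d * L) + ereal e" .
  qed
qed


theorem lemma8:
  fixes f :: "real^'n \<Rightarrow> real^'m \<Rightarrow> real^'n"
    and V :: "real^'n \<Rightarrow> real" and \<gamma> :: "real \<Rightarrow> real"
  assumes "continuous_on UNIV (\<lambda>(x, u). f x u)"
    and "f 0 0 = 0"
    and "FxT_ISS_Lyap f V"
    and "\<gamma> \<in> KPinv"
  shows "\<exists>lam::real. lam \<ge> 1 \<and> FxT_ISS_Lyap f (\<lambda>x. (\<gamma> (V x)) powr lam)"
proof -
  from assms(3) obtain \<alpha>l \<alpha>u chi \<Psi> where Vll: "loc_lipschitz V" and Vnn: "\<forall>x. V x \<ge> 0"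
    and K: "\<alpha>l \<in> Kinf" "\<alpha>u \<in> Kinf" "chi \<in> Kinf" "\<Psi> \<in> KFxT"
    and bnd: "\<forall>x. \<alpha>l (norm x) \<le> V x \<and> V x \<le> \<alpha>u (norm x)"
    and dec: "\<forall>x u. V x \<ge> chi (norm u) \<longrightarrow> dini V x (f x u) \<le> ereal (- \<Psi> (V x))"
    unfolding FxT_ISS_Lyap_def by blast
  from K(4) obtain c1 c2 p1 p2 where cp: "c1 > 0" "c2 > 0" "0 < p1" "p1 < 1" "p2 > 1"
    and Psi: "\<forall>s\<ge>0. \<Psi> s = c1 * s powr p1 + c2 * s powr p2"
    unfolding KFxT_def by blast
  from assms(4) obtain \<beta> where \<gamma>K: "\<gamma> \<in> Kinf" and \<beta>KP: "\<beta> \<in> KP"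
    and inv: "\<forall>s\<ge>0. \<beta> (\<gamma> s) = s \<and> \<gamma> (\<beta> s) = s"
    unfolding KPinv_def by blast
  have \<beta>K: "\<beta> \<in> Kinf" using \<beta>KP unfolding KP_def by blast
  obtain a b A k \<delta> :: real and d\<beta> :: "real \<Rightarrow> real" where
    a0: "0<a" and ab: "a\<le>b" and A0: "0<A" and k0: "0<k" and \<delta>: "0<\<delta>" "\<delta> \<le> 1"
    and dder: "\<forall>s>0. (\<beta> has_real_derivative d\<beta> s) (at s) \<and> d\<beta> s > 0"
    and dcont: "continuous_on {0<..} d\<beta>"
    and upper: "\<forall>s>0. d\<beta> s \<le> A*(s powr (a-1) + s powr (b-1))"
    and low0: "\<forall>s. 0<s \<and> s\<le>1 \<longrightarrow> k * s powr a \<le> \<beta> s"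
    and low1: "\<forall>s\<ge>1. k * s powr b \<le> \<beta> s"
    and lowd: "\<forall>s. 0<s \<and> s\<le>\<delta> \<longrightarrow> k * s powr (a-1) \<le> d\<beta> s"
    by (rule KP_props[OF \<beta>KP])
  have dpos: "d\<beta> s > 0" if "s > 0" for s using dder that by blast
  have dpos0: "d\<beta> s \<noteq> 0" if "s \<ge> \<delta>" for s using dpos[of s] that \<delta> by simp
  define lam where "lam = a + 1"
  have lam: "lam \<ge> 1" "lam > 0" "lam - a = 1" unfolding lam_def using a0 by auto
  define g where "g r = \<gamma> r powr lam" for r
  have geq: "g = (\<lambda>r. \<gamma> r powr lam)" by (rule ext) (simp add: g_def)
  have \<gamma>cont: "continuous_on {0..} \<gamma>" using \<gamma>K unfolding Kinf_def by blast
  have gK: "g \<in> Kinf"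
    unfolding Kinf_def mem_Collect_eq
  proof (intro conjI)
    show "continuous_on {0..} g" unfolding geq
      by (rule continuous_on_powr'[OF \<gamma>cont continuous_on_const]) (use lam Kinf_nonneg[OF \<gamma>K] in auto)
    show "strict_mono_on {0..} g"
    proof (rule strict_mono_onI)
      fix r s :: real assume "r \<in> {0..}" "s \<in> {0..}" "r < s"
      then show "g r < g s" unfolding g_def
        using Kinf_less[OF \<gamma>K] Kinf_nonneg[OF \<gamma>K] lam by (intro powr_less_mono2) auto
    qed
    show "g 0 = 0" using Kinf_0[OF \<gamma>K] by (simp add: g_def)
    have \<gamma>top: "filterlim \<gamma> at_top at_top" using \<gamma>K unfolding Kinf_def by blast
    show "filterlim g at_top at_top"
    proof (rule filterlim_at_top_mono[OF \<gamma>top])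
      have "eventually (\<lambda>r. 1 \<le> \<gamma> r) at_top" using \<gamma>top unfolding filterlim_at_top by blast
      then show "eventually (\<lambda>r. \<gamma> r \<le> g r) at_top"
      proof eventually_elim
        case (elim r)
        have "\<gamma> r powr 1 \<le> \<gamma> r powr lam" using elim lam by (intro powr_mono) auto
        then show ?case using elim by (simp add: g_def)
      qed
    qed
  qed
  define g' where "g' r = lam * \<gamma> r powr (lam - 1) / d\<beta> (\<gamma> r)" for r
  have gder: "(g has_real_derivative g' r) (at r)" "g' r > 0" if r: "r > 0" for r
  proof -
    have s: "\<gamma> r > 0" using Kinf_pos[OF \<gamma>K r] .
    have ic: "isCont \<gamma> r" using continuous_on_interior[OF \<gamma>cont, of r] r by simp
    have db: "(\<beta> has_real_derivative d\<beta> (\<gamma> r)) (at (\<gamma> r))" "d\<beta> (\<gamma> r) > 0" using dder s by auto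
    have "(\<gamma> has_real_derivative inverse (d\<beta> (\<gamma> r))) (at r)"
      by (rule DERIV_inverse_function[where f=\<beta> and a=0 and b="r+1"]) (use db r inv ic in auto)
    from DERIV_fun_powr[OF this s, of lam]
    show "(g has_real_derivative g' r) (at r)" unfolding geq by (simp add: g'_def divide_inverse)
    show "g' r > 0" unfolding g'_def using lam s db by simp
  qed
  have glip: "\<exists>L\<ge>0. \<forall>y z. 0\<le>y \<and> y\<le>M \<and> 0\<le>z \<and> z\<le>M \<longrightarrow> \<bar>g y - g z\<bar> \<le> L*\<bar>y - z\<bar>" for M
  proof -
    define S where "S = max (\<gamma> M) \<delta>"
    define G where "G s = lam * s powr (lam - 1) / d\<beta> s" for s
    have Gc: "continuous_on {\<delta>..S} G"
    proof -
      have dc: "continuous_on {\<delta>..S} d\<beta>" by (rule continuous_on_subset[OF dcont]) (use \<delta> in auto)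
      show ?thesis unfolding G_def
        by (intro continuous_intros dc) (use \<delta> in \<open>auto dest!: dpos0\<close>)
    qed
    have "\<exists>x\<in>{\<delta>..S}. \<forall>y\<in>{\<delta>..S}. G y \<le> G x"
      by (rule continuous_attains_sup[OF compact_Icc _ Gc]) (simp add: S_def)
    then obtain B where B: "\<And>y. y \<in> {\<delta>..S} \<Longrightarrow> G y \<le> B" by blast
    define L where "L = max (lam / k) B"
    have L0: "L \<ge> 0" unfolding L_def using lam k0 by (simp add: le_max_iff_disj)
    have bound: "g' r \<le> L" if r: "0 < r" "r \<le> M" for r
    proof -
      define s where "s = \<gamma> r"
      have s0: "s > 0" unfolding s_def using Kinf_pos[OF \<gamma>K r(1)] .
      have sS: "s \<le> S" unfolding s_def S_def using Kinf_mono[OF \<gamma>K, of r M] r by auto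
      have g's: "g' r = G s" unfolding g'_def G_def s_def ..
      show ?thesis
      proof (cases "s \<le> \<delta>")
        case True
        have kd: "k * s powr (a-1) \<le> d\<beta> s" using lowd s0 True by auto
        have kp: "0 < k * s powr (a-1)" using k0 s0 by simp
        have "G s \<le> lam * s powr (lam - 1) / (k * s powr (a-1))"
          unfolding G_def using kd kp lam s0 by (intro divide_left_mono) auto
        also have "\<dots> = (lam / k) * (s powr (lam - 1) / s powr (a - 1))" by simp
        also have "s powr (lam - 1) / s powr (a - 1) = s powr ((lam - 1) - (a - 1))"
          using s0 by (simp add: powr_diff)
        also have "\<dots> = s" using lam s0 by simp
        also have "(lam / k) * s \<le> (lam / k) * 1" using True \<delta> lam k0 by (intro mult_left_mono) auto
        finally show ?thesis using g's unfolding L_def by simp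
      next
        case False
        then have "G s \<le> B" using B sS by auto
        then show ?thesis using g's unfolding L_def by simp
      qed
    qed
    have main: "\<bar>g y - g z\<bar> \<le> L*\<bar>y - z\<bar>" if yz: "0 \<le> z" "z < y" "y \<le> M" for y z
    proof -
      have "continuous_on {z..y} g"
        by (rule continuous_on_subset[of "{0..}"]) (use gK yz in \<open>auto simp: Kinf_def\<close>)
      moreover have "g differentiable at x" if "z < x" "x < y" for x
        using gder(1)[of x] that yz real_differentiable_def by auto
      ultimately obtain l \<xi> where \<xi>: "z < \<xi>" "\<xi> < y" "(g has_real_derivative l) (at \<xi>)"
        "g y - g z = (y - z) * l"
        using MVT[OF yz(2)] by blast
      have "l = g' \<xi>" using DERIV_unique[OF \<xi>(3) gder(1)] \<xi> yz by auto
      then have l: "0 < l" "l \<le> L" using gder(2)[of \<xi>] bound[of \<xi>] \<xi> yz by auto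
      have "\<bar>g y - g z\<bar> = (y - z) * l" using \<xi>(4) l yz by simp
      also have "\<dots> \<le> (y - z) * L" using l yz by (intro mult_left_mono) auto
      finally show ?thesis using yz by (simp add: mult.commute)
    qed
    show ?thesis
    proof (intro exI[of _ L] conjI allI impI L0)
      fix y z assume h: "0\<le>y \<and> y\<le>M \<and> 0\<le>z \<and> z\<le>M"
      consider "z < y" | "y < z" | "y = z" by linarith
      then show "\<bar>g y - g z\<bar> \<le> L*\<bar>y - z\<bar>"
      proof cases
        case 1 then show ?thesis using main h by auto
      next
        case 2
        have "\<bar>g z - g y\<bar> \<le> L*\<bar>z - y\<bar>" using main[of y z] h 2 by auto
        then show ?thesis by (simp add: abs_minus_commute)
      next
        case 3 then show ?thesis by simp
      qed
    qed
  qed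
  define e1 where "e1 = 1 + a * p1"
  define e2 where "e2 = lam + b * (p2 - 1)"
  define q1 where "q1 = e1 / lam"
  define q2 where "q2 = e2 / lam"
  define K1 where "K1 = lam * c1 * k powr p1 / (2*A)"
  define K2 where "K2 = lam * c2 * k powr p2 / (2*A)"
  define c' where "c' = min K1 K2 / 2"
  have b0: "b > 0" using a0 ab by simp
  have e1: "e1 > 0" unfolding e1_def using mult_pos_pos[OF a0 cp(3)] by simp
  have e12: "e1 \<le> e2"
  proof -
    have "a * p1 \<le> a" using a0 cp by (simp add: mult_left_le)
    moreover have "b * (p2 - 1) \<ge> 0" using b0 cp by simp
    ultimately show ?thesis unfolding e1_def e2_def lam_def by simp
  qed
  have q: "0 < q1" "q1 < 1" "1 < q2"
  proof -
    show "0 < q1" unfolding q1_def using e1 lam by simp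
    have "a * p1 < a * 1" using a0 cp by (intro mult_strict_left_mono) auto
    then have "e1 < lam" unfolding e1_def lam_def by simp
    then show "q1 < 1" unfolding q1_def using lam by simp
    have "b * (p2 - 1) > 0" using b0 cp by (simp add: mult_pos_pos)
    then have "e2 > lam" unfolding e2_def by simp
    then show "1 < q2" unfolding q2_def using lam by simp
  qed
  have K0: "K1 > 0" "K2 > 0" unfolding K1_def K2_def using lam cp k0 A0 by auto
  have c'0: "c' > 0" unfolding c'_def using K0 by simp
  have c'le: "2 * c' \<le> K1" "2 * c' \<le> K2" unfolding c'_def by auto
  have gdec: "c' * g r powr q1 + c' * g r powr q2 \<le> g' r * \<Psi> r" if r: "r > 0" for r
  proof -
    define s where "s = \<gamma> r"
    have s0: "s > 0" unfolding s_def using Kinf_pos[OF \<gamma>K r] .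
    have rs: "r = \<beta> s" unfolding s_def using inv r by simp
    have gp: "g r powr q = s powr (lam * q)" for q unfolding g_def s_def by (simp add: powr_powr)
    have lhs: "c' * g r powr q1 + c' * g r powr q2 = c' * s powr e1 + c' * s powr e2"
      unfolding gp q1_def q2_def using lam by simp
    have g'\<Psi>: "g' r * \<Psi> r = lam * s powr (lam - 1) * \<Psi> r / d\<beta> s" unfolding g'_def s_def by simp
    have Psir: "\<Psi> r = c1 * r powr p1 + c2 * r powr p2" using Psi r by simp
    have ds: "d\<beta> s > 0" using dpos s0 .
    have Psinn: "\<Psi> r \<ge> 0" unfolding Psir using cp by simp
    have num0: "lam * s powr (lam - 1) \<ge> 0" using lam by simp
    show ?thesis
    proof (cases "s \<le> 1")
      case True
      have kr: "k * s powr a \<le> r" using low0 s0 True rs by auto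
      have "(k * s powr a) powr p1 \<le> r powr p1" using kr k0 cp by (intro powr_mono2) auto
      then have "k powr p1 * s powr (a * p1) \<le> r powr p1"
        using k0 s0 by (simp add: powr_mult powr_powr)
      then have "c1 * (k powr p1 * s powr (a * p1)) \<le> c1 * r powr p1" using cp by (intro mult_left_mono) auto
      moreover have "c1 * r powr p1 \<ge> 0" "c2 * r powr p2 \<ge> 0" using cp by auto
      ultimately have P: "c1 * (k powr p1 * s powr (a * p1)) \<le> \<Psi> r"
        unfolding Psir by linarith
      have "s powr (b-1) \<le> s powr (a-1)" using True s0 ab by (intro powr_mono') auto
      then have "A*(s powr (a-1) + s powr (b-1)) \<le> A*(s powr (a-1) + s powr (a-1))"
        using A0 by (intro mult_left_mono) auto
      then have D: "d\<beta> s \<le> 2 * A * s powr (a-1)" using upper s0 by force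
      have D0: "0 < 2 * A * s powr (a-1)" using A0 s0 by simp
      have "lam * s powr (lam - 1) * (c1 * (k powr p1 * s powr (a * p1))) / (2 * A * s powr (a-1))
          \<le> lam * s powr (lam - 1) * \<Psi> r / (2 * A * s powr (a-1))"
        using P num0 D0 by (intro divide_right_mono mult_left_mono) auto
      also have "\<dots> \<le> lam * s powr (lam - 1) * \<Psi> r / d\<beta> s"
        using D ds num0 Psinn lam A0 by (intro divide_left_mono mult_nonneg_nonneg mult_pos_pos) auto
      finally have 1: "lam * s powr (lam - 1) * (c1 * (k powr p1 * s powr (a * p1))) / (2 * A * s powr (a-1))
          \<le> g' r * \<Psi> r" using g'\<Psi> by simp
      have "lam * s powr (lam - 1) * (c1 * (k powr p1 * s powr (a * p1))) / (2 * A * s powr (a-1))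
          = K1 * (s powr (lam - 1) * s powr (a * p1) / s powr (a - 1))"
        unfolding K1_def by (simp add: field_simps)
      also have "s powr (lam - 1) * s powr (a * p1) / s powr (a - 1) = s powr e1"
        using s0 by (simp add: powr_add[symmetric] powr_diff[symmetric] e1_def lam_def add.commute)
      finally have 2: "K1 * s powr e1 \<le> g' r * \<Psi> r" using 1 by simp
      have "s powr e2 \<le> s powr e1" using True s0 e12 by (intro powr_mono') auto
      then have "c' * s powr e1 + c' * s powr e2 \<le> c' * s powr e1 + c' * s powr e1" using c'0
        by simp
      also have "\<dots> = 2 * c' * s powr e1" by simp
      also have "\<dots> \<le> K1 * s powr e1" using c'le by (intro mult_right_mono) auto
      finally show ?thesis using 2 lhs by simp
    next
      case False
      have kr: "k * s powr b \<le> r" using low1 False rs by auto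
      have "(k * s powr b) powr p2 \<le> r powr p2" using kr k0 cp by (intro powr_mono2) auto
      then have "k powr p2 * s powr (b * p2) \<le> r powr p2"
        using k0 s0 by (simp add: powr_mult powr_powr)
      then have "c2 * (k powr p2 * s powr (b * p2)) \<le> c2 * r powr p2" using cp by (intro mult_left_mono) auto
      moreover have "c1 * r powr p1 \<ge> 0" "c2 * r powr p2 \<ge> 0" using cp by auto
      ultimately have P: "c2 * (k powr p2 * s powr (b * p2)) \<le> \<Psi> r"
        unfolding Psir by linarith
      have "s powr (a-1) \<le> s powr (b-1)" using False s0 ab by (intro powr_mono) auto
      then have "A*(s powr (a-1) + s powr (b-1)) \<le> A*(s powr (b-1) + s powr (b-1))"
        using A0 by (intro mult_left_mono) auto
      then have D: "d\<beta> s \<le> 2 * A * s powr (b-1)" using upper s0 by force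
      have D0: "0 < 2 * A * s powr (b-1)" using A0 s0 by simp
      have "lam * s powr (lam - 1) * (c2 * (k powr p2 * s powr (b * p2))) / (2 * A * s powr (b-1))
          \<le> lam * s powr (lam - 1) * \<Psi> r / (2 * A * s powr (b-1))"
        using P num0 D0 by (intro divide_right_mono mult_left_mono) auto
      also have "\<dots> \<le> lam * s powr (lam - 1) * \<Psi> r / d\<beta> s"
        using D ds num0 Psinn lam A0 by (intro divide_left_mono mult_nonneg_nonneg mult_pos_pos) auto
      finally have 1: "lam * s powr (lam - 1) * (c2 * (k powr p2 * s powr (b * p2))) / (2 * A * s powr (b-1))
          \<le> g' r * \<Psi> r" using g'\<Psi> by simp
      have "lam * s powr (lam - 1) * (c2 * (k powr p2 * s powr (b * p2))) / (2 * A * s powr (b-1))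
          = K2 * (s powr (lam - 1) * s powr (b * p2) / s powr (b - 1))"
        unfolding K2_def by (simp add: field_simps)
      also have "s powr (lam - 1) * s powr (b * p2) / s powr (b - 1) = s powr e2"
        using s0 by (simp add: powr_add[symmetric] powr_diff[symmetric] e2_def algebra_simps)
      finally have 2: "K2 * s powr e2 \<le> g' r * \<Psi> r" using 1 by simp
      have "s powr e1 \<le> s powr e2" using False s0 e12 by (intro powr_mono) auto
      then have "c' * s powr e1 + c' * s powr e2 \<le> c' * s powr e2 + c' * s powr e2" using c'0
        by simp
      also have "\<dots> = 2 * c' * s powr e2" by simp
      also have "\<dots> \<le> K2 * s powr e2" using c'le by (intro mult_right_mono) auto
      finally show ?thesis using 2 lhs by simp
    qed
  qed
  define \<Psi>' where "\<Psi>' w = c' * w powr q1 + c' * w powr q2" for w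
  have W: "(\<lambda>x. (\<gamma> (V x)) powr lam) = (\<lambda>x. g (V x))" by (simp add: g_def)
  have Vcont: "isCont V x" for x
  proof -
    obtain e L where e: "e > 0" "L-lipschitz_on (ball x e) V" using Vll unfolding loc_lipschitz_def by blast
    have "continuous_on (ball x e) V" using e(2) by (rule lipschitz_on_continuous_on)
    then show ?thesis using e(1) by (intro continuous_on_interior[of "ball x e"]) auto
  qed
  have Wll: "loc_lipschitz (\<lambda>x. g (V x))"
    unfolding loc_lipschitz_def
  proof
    fix x0
    obtain e L where e: "e > 0" "L-lipschitz_on (ball x0 e) V" using Vll unfolding loc_lipschitz_def by blast
    have L0: "L \<ge> 0" using e(2) by (rule lipschitz_on_nonneg)
    define M where "M = V x0 + L * e"
    obtain L' where L': "L' \<ge> 0" "\<forall>y z. 0\<le>y \<and> y\<le>M \<and> 0\<le>z \<and> z\<le>M \<longrightarrow> \<bar>g y - g z\<bar> \<le> L'*\<bar>y - z\<bar>"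
      using glip[of M] by blast
    have VM: "V y \<le> M" if "y \<in> ball x0 e" for y
    proof -
      have "dist (V y) (V x0) \<le> L * dist y x0" using e(2) that by (rule lipschitz_onD) (use e(1) in simp)
      moreover have "dist y x0 \<le> e" using that by (simp add: dist_commute)
      then have "L * dist y x0 \<le> L * e" using L0 by (intro mult_left_mono) auto
      ultimately show ?thesis unfolding M_def dist_real_def by linarith
    qed
    have "(L' * L)-lipschitz_on (ball x0 e) (\<lambda>x. g (V x))"
    proof (rule lipschitz_onI)
      fix y z assume yz: "y \<in> ball x0 e" "z \<in> ball x0 e"
      have "\<bar>g (V y) - g (V z)\<bar> \<le> L' * \<bar>V y - V z\<bar>"
        using L'(2) VM[OF yz(1)] VM[OF yz(2)] Vnn by blast
      also have "\<bar>V y - V z\<bar> \<le> L * dist y z"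
        using lipschitz_onD[OF e(2) yz] by (simp add: dist_real_def)
      then have "L' * \<bar>V y - V z\<bar> \<le> L' * (L * dist y z)" using L'(1) by (intro mult_left_mono) auto
      finally show "dist (g (V y)) (g (V z)) \<le> L' * L * dist y z" by (simp add: dist_real_def mult.assoc)
    next
      show "0 \<le> L' * L" using L0 L'(1) by simp
    qed
    then show "\<exists>e>0. \<exists>L. L-lipschitz_on (ball x0 e) (\<lambda>x. g (V x))" using e(1) by blast
  qed
  have \<Psi>'K: "\<Psi>' \<in> KFxT" unfolding KFxT_def \<Psi>'_def
    using c'0 q by (intro CollectI exI[of _ c'] exI[of _ q1] exI[of _ q2]) auto
  have "FxT_ISS_Lyap f (\<lambda>x. g (V x))"
    unfolding FxT_ISS_Lyap_def
    apply (intro conjI)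
      apply (rule Wll)
     apply (use Kinf_nonneg[OF gK] Vnn in blast)
    apply (rule exI[of _ "\<lambda>s. g (\<alpha>l s)"], rule exI[of _ "\<lambda>s. g (\<alpha>u s)"], rule exI[of _ "\<lambda>s. g (chi s)"], rule exI[of _ \<Psi>'])
  proof (intro conjI allI impI)
    show "(\<lambda>s. g (\<alpha>l s)) \<in> Kinf" "(\<lambda>s. g (\<alpha>u s)) \<in> Kinf" "(\<lambda>s. g (chi s)) \<in> Kinf"
      using Kinf_comp[OF _ gK] K by auto
    show "\<Psi>' \<in> KFxT" by (rule \<Psi>'K)
    show "g (\<alpha>l (norm x)) \<le> g (V x)" for x
      using bnd Kinf_mono[OF gK] Kinf_nonneg[OF K(1)] by simp
    show "g (V x) \<le> g (\<alpha>u (norm x))" for x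
      using bnd Kinf_mono[OF gK] Vnn by simp
    fix x :: "real^'n" and u :: "real^'m" assume h: "g (chi (norm u)) \<le> g (V x)"
    have cV: "chi (norm u) \<le> V x"
    proof (rule ccontr)
      assume "\<not> chi (norm u) \<le> V x"
      then have "g (V x) < g (chi (norm u))" using Kinf_less[OF gK] Vnn by simp
      then show False using h by simp
    qed
    have dV: "dini V x (f x u) \<le> ereal (- \<Psi> (V x))" using dec cV by blast
    show "dini (\<lambda>x. g (V x)) x (f x u) \<le> ereal (- \<Psi>' (g (V x)))"
    proof (cases "V x = 0")
      case True
      have "\<alpha>l (norm x) \<le> 0" using bnd True by metis
      then have x0: "x = 0" using Kinf_pos[OF K(1), of "norm x"] by force
      have "chi (norm u) \<le> 0" using cV True by simp
      then have u0: "u = 0" using Kinf_pos[OF K(3), of "norm u"] by force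
      have "dini (\<lambda>x. g (V x)) x (f x u) = Limsup (at_right 0) (\<lambda>h::real. ereal 0)"
        unfolding dini_def x0 u0 assms(2) by simp
      also have "\<dots> = 0" by (simp add: Limsup_const)
      finally show ?thesis using True Kinf_0[OF gK] q unfolding \<Psi>'_def by (simp add: zero_ereal_def)
    next
      case False
      then have r: "V x > 0" using Vnn by (simp add: less_le)
      have Pp: "\<Psi> (V x) > 0" using Psi r cp by (simp add: add_pos_pos)
      have "dini (\<lambda>x. g (V x)) x (f x u) \<le> ereal (g' (V x) * (- \<Psi> (V x)))"
        by (rule dini_chain[OF Vcont gder(1)[OF r] gder(2)[OF r]]) (use Pp dV in auto)
      also have "g' (V x) * (- \<Psi> (V x)) \<le> - \<Psi>' (g (V x))"
        using gdec[OF r] unfolding \<Psi>'_def by simp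
      finally show ?thesis by simp
    qed
  qed
  then show ?thesis using lam W by auto
qed

end
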